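(* Let $G$ be a dense $K_4^3\cup e$-free $3$-graph with $\lambda(G)>\frac{\sqrt3}{18}$. Then $G$ is $X_3$-free.
   Context: $K_4^3\cup e$ is the $3$-graph on $\{1,\dots,7\}$ with edges $\{123,124,134,234,567\}$. For a $3$-graph $G$ on $[n]$, $\lambda(G)=\max\{\sum_{e\in E(G)}\prod_{i\in e}x_i:\sum_ix_i=1,x_i\ge0\}$. An $r$-graph $G$ is dense if $\lambda(G')<\lambda(G)$ for every proper subgraph $G'$ of $G$. $X_i$ is the $3$-graph on $[2i+2]$ in which $\{1,2,2j+1,2j+2\}$ spans a $K_4^3$ for each $1\le j\le i$, and no other edges. *)

theory Defs
  imports Complex_Main
begin

definition hypergraph3 :: "'a set \<Rightarrow> 'a set set \<Rightarrow> bool" where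
  "hypergraph3 V E \<longleftrightarrow> finite V \<and> (\<forall>e\<in>E. e \<subseteq> V \<and> card e = 3)"

definition lagrangian :: "'a set \<Rightarrow> 'a set set \<Rightarrow> real" where
  "lagrangian V E = (if V = {} then 0 else
     Sup {(\<Sum>e\<in>E. \<Prod>i\<in>e. x i) | x :: 'a \<Rightarrow> real.
            (\<forall>i\<in>V. 0 \<le> x i) \<and> (\<Sum>i\<in>V. x i) = 1})"

definition dense3 :: "'a set \<Rightarrow> 'a set set \<Rightarrow> bool" where
  "dense3 V E \<longleftrightarrow> (\<forall>V' E'. hypergraph3 V' E' \<and> V' \<subseteq> V \<and> E' \<subseteq> E \<and> (V', E') \<noteq> (V, E)
       \<longrightarrow> lagrangian V' E' < lagrangian V E)"

definition contains_copy :: "'b set \<Rightarrow> 'b set set \<Rightarrow> 'a set \<Rightarrow> 'a set set \<Rightarrow> bool" where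
  "contains_copy VF EF V E \<longleftrightarrow>
     (\<exists>f. inj_on f VF \<and> f ` VF \<subseteq> V \<and> (\<forall>e\<in>EF. f ` e \<in> E))"

definition K43e_V :: "nat set" where "K43e_V = {1..7}"
definition K43e_E :: "nat set set" where
  "K43e_E = {{1,2,3},{1,2,4},{1,3,4},{2,3,4},{5,6,7}}"

definition X_V :: "nat \<Rightarrow> nat set" where "X_V i = {1..2*i+2}"
definition X_E :: "nat \<Rightarrow> nat set set" where
  "X_E i = {e. \<exists>j\<in>{1..i}. e \<subseteq> {1, 2, 2*j+1, 2*j+2} \<and> card e = 3}"

end

theory Submission
  imports Defs
begin

lemma h1: fixes u::real assumes "0\<le>u" "u\<le>1" shows "u^2*(1-u)/4 + u*(1-u)^2/2 \<le> sqrt 3/18"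
proof -
  define s where "s = sqrt 3"
  have ss: "s^2 = 3" unfolding s_def by simp
  have s0: "s \<ge> 0" unfolding s_def by simp
  have e: "(u - (1 - s/3))^2 * ((1 + 2*s/3) - u) = 2*s/9 - u^3 + 3*u^2 - 2*u"
  proof -
    have "(u - (1 - s/3))^2 * ((1 + 2*s/3) - u) = 2*s/9 - u^3 + 3*u^2 - 2*u + (s^2 - 3)*(2*s/27 - 1/3 + u/3)"
      by (simp add: field_simps power2_eq_square power3_eq_cube)
    then show ?thesis using ss by simp
  qed
  have "0 \<le> (u - (1 - s/3))^2 * ((1 + 2*s/3) - u)" using assms s0 by simp
  then have "0 \<le> 2*s/9 - u^3 + 3*u^2 - 2*u" using e by simp
  have "u^2*(1-u)/4 + u*(1-u)^2/2 = (u^3 - 3*u^2 + 2*u)/4"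
    by (simp add: field_simps power2_eq_square power3_eq_cube)
  also have "\<dots> \<le> s/18" using \<open>0 \<le> 2*s/9 - u^3 + 3*u^2 - 2*u\<close> by (simp add: field_simps)
  finally show ?thesis unfolding s_def .
qed

lemma aux108: "(a::real) - c = x/108 \<Longrightarrow> x \<le> 0 \<Longrightarrow> a \<le> c" by linarith

lemma k1: fixes u::real assumes "0\<le>u" "u\<le>1" shows "u^2*(1-u)/4 + 5*u*(1-u)^2/12 + (1-u)^3/27 \<le> 0.096"
proof -
  define w where "w = u - 3/8"
  have id: "u^2*(1-u)/4 + 5*u*(1-u)^2/12 + (1-u)^3/27 - 0.096 = (w^2*(14*u - 40.5) + 0.65625*w - 0.42659375)/108"
    unfolding w_def by (simp add: field_simps power2_eq_square power3_eq_cube)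
  have a: "w^2*(14*u - 40.5) \<le> w^2 * (-26.5)"
    by (rule mult_left_mono) (use assms in auto)
  have b: "0 \<le> (w - 21/1696)^2" by simp
  have "w^2*(14*u - 40.5) + 0.65625*w - 0.42659375 \<le> 0"
    using a b by (simp add: power2_eq_square algebra_simps)
  then show ?thesis using aux108[OF id] by blast
qed

lemma amgm: fixes x y z :: real assumes "x\<ge>0" "y\<ge>0" "z\<ge>0" shows "x*y*z \<le> ((x+y+z)/3)^3"
proof -
  define m where "m = (x+y)/2"
  have "x*y \<le> m^2" unfolding m_def using sum_squares_ge_zero[of "x-y" 0]
    by (simp add: power2_eq_square algebra_simps)
  hence "x*y*z \<le> m^2*z" using assms by (simp add: mult_right_mono)
  also have "m^2*z \<le> ((2*m+z)/3)^3"
  proof -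
    have "0 \<le> (m-z)^2*(8*m+z)" using assms unfolding m_def by simp
    moreover have "((2*m+z)/3)^3 - m^2*z = (m-z)^2*(8*m+z)/27"
      by (simp add: field_simps power2_eq_square power3_eq_cube)
    ultimately show ?thesis by linarith
  qed
  also have "2*m+z = x+y+z" unfolding m_def by simp
  finally show ?thesis .
qed

lemma bound_real:
  fixes al be S Q c1 d1 c2 d2 c3 d3 :: real
  assumes nn: "0\<le>al" "0\<le>be" "0\<le>c1" "0\<le>d1" "0\<le>c2" "0\<le>d2" "0\<le>c3" "0\<le>d3"
    and sum1: "al+be+S = 1" and sig: "c1+d1+c2+d2+c3+d3 \<le> S"
    and Qb: "c1^2+d1^2+c2^2+d2^2+c3^2+d3^2 \<le> Q"
  shows "al*be*S + (al+be)*((S^2 - Q)/2) + (c1+d1)*(c2+d2)*(c3+d3) \<le> sqrt 3/18"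
proof -
  define u where "u = al+be"
  define p1 where "p1 = c1+d1"
  define p2 where "p2 = c2+d2"
  define p3 where "p3 = c3+d3"
  define \<sigma> where "\<sigma> = p1+p2+p3"
  have u0: "0 \<le> u" unfolding u_def using nn by simp
  have S0: "0 \<le> \<sigma>" unfolding \<sigma>_def p1_def p2_def p3_def using nn by simp
  have sS: "\<sigma> \<le> S" unfolding \<sigma>_def p1_def p2_def p3_def using sig by simp
  have Sdef: "S = 1 - u" unfolding u_def using sum1 by simp
  have u1: "u \<le> 1" using S0 sS Sdef by simp
  have ab: "al*be*S \<le> u^2/4*S"
  proof (rule mult_right_mono)
    show "al*be \<le> u^2/4" unfolding u_def using sum_squares_ge_zero[of "al-be" 0]
      by (simp add: power2_eq_square algebra_simps)
    show "0 \<le> S" using S0 sS by simp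
  qed
  have q1: "c1^2+d1^2 \<ge> p1^2/2" unfolding p1_def using sum_squares_ge_zero[of "c1-d1" 0]
      by (simp add: power2_eq_square algebra_simps)
  have q2: "c2^2+d2^2 \<ge> p2^2/2" unfolding p2_def using sum_squares_ge_zero[of "c2-d2" 0]
      by (simp add: power2_eq_square algebra_simps)
  have q3: "c3^2+d3^2 \<ge> p3^2/2" unfolding p3_def using sum_squares_ge_zero[of "c3-d3" 0]
      by (simp add: power2_eq_square algebra_simps)
  have q4: "p1^2+p2^2+p3^2 \<ge> \<sigma>^2/3" unfolding \<sigma>_def
    using sum_squares_ge_zero[of "p1-p2" "p2-p3"] sum_squares_ge_zero[of "p1-p3" 0]
    by (simp add: power2_eq_square algebra_simps)
  have Qs: "Q \<ge> \<sigma>^2/6" using Qb q1 q2 q3 q4 by linarith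
  have mid: "(al+be)*((S^2 - Q)/2) \<le> u*((S^2 - \<sigma>^2/6)/2)"
    unfolding u_def[symmetric] by (rule mult_left_mono) (use Qs u0 in auto)
  have tri: "(c1+d1)*(c2+d2)*(c3+d3) \<le> (\<sigma>/3)^3"
    unfolding \<sigma>_def p1_def p2_def p3_def by (rule amgm) (use nn in auto)
  have main: "al*be*S + (al+be)*((S^2 - Q)/2) + (c1+d1)*(c2+d2)*(c3+d3)
     \<le> (u^2*(1-u)/4 + u*(1-u)^2/2) + \<sigma>^2*(\<sigma>/27 - u/12)"
  proof -
    have "u^2/4*S + u*((S^2 - \<sigma>^2/6)/2) + (\<sigma>/3)^3 = (u^2*(1-u)/4 + u*(1-u)^2/2) + \<sigma>^2*(\<sigma>/27 - u/12)"
      unfolding Sdef by (simp add: field_simps power2_eq_square power3_eq_cube)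
    then show ?thesis using ab mid tri by linarith
  qed
  have h: "u^2*(1-u)/4 + u*(1-u)^2/2 \<le> sqrt 3/18" using h1 u0 u1 by blast
  show ?thesis
  proof (cases "\<sigma>/27 \<le> u/12")
    case True
    then have "\<sigma>^2*(\<sigma>/27 - u/12) \<le> 0" by (simp add: mult_nonneg_nonpos)
    then show ?thesis using main h by linarith
  next
    case False
    have "\<sigma>^2*(\<sigma>/27 - u/12) \<le> S^2*(S/27 - u/12)"
      by (rule mult_mono) (use False S0 sS in \<open>auto intro: power_mono\<close>)
    also have "S^2*(S/27 - u/12) = (1-u)^2*((1-u)/27 - u/12)" unfolding Sdef ..
    finally have g: "\<sigma>^2*(\<sigma>/27 - u/12) \<le> (1-u)^2*((1-u)/27 - u/12)" .
    have "(u^2*(1-u)/4 + u*(1-u)^2/2) + (1-u)^2*((1-u)/27 - u/12) = u^2*(1-u)/4 + 5*u*(1-u)^2/12 + (1-u)^3/27"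
      by (simp add: field_simps power2_eq_square power3_eq_cube)
    moreover have "u^2*(1-u)/4 + 5*u*(1-u)^2/12 + (1-u)^3/27 \<le> 0.096" using k1 u0 u1 by blast
    moreover have "0.096 \<le> sqrt 3/18"
    proof -
      have "1.728 \<le> sqrt 3" by (rule real_le_rsqrt) (simp add: power2_eq_square)
      then show ?thesis by simp
    qed
    ultimately show ?thesis using main g by linarith
  qed
qed

lemma pairs_bound:
  fixes x :: "'a \<Rightarrow> real"
  assumes fin: "finite R" and nn: "\<forall>r\<in>R. 0 \<le> x r" and A: "A \<subseteq> {p. p \<subseteq> R \<and> card p = 2}"
  shows "(\<Sum>p\<in>A. \<Prod>i\<in>p. x i) \<le> ((\<Sum>r\<in>R. x r)^2 - (\<Sum>r\<in>R. (x r)^2))/2"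
proof -
  define op where "op p = {(u,v). u\<in>p \<and> v\<in>p \<and> u\<noteq>v}" for p :: "'a set"
  define g where "g q = x (fst q) * x (snd q)" for q :: "'a \<times> 'a"
  have finA: "finite A" using A fin by (metis (no_types, lifting) finite_Pow_iff mem_Collect_eq rev_finite_subset subsetI Pow_iff subset_eq)
  have one: "(\<Prod>i\<in>p. x i) = (\<Sum>q\<in>op p. g q)/2" if "p \<in> A" for p
  proof -
    from that A have "card p = 2" by auto
    then obtain u v where p: "p = {u,v}" "u \<noteq> v" by (auto simp: card_2_iff)
    have "op p = {(u,v),(v,u)}" unfolding op_def p using p(2) by auto
    then show ?thesis using p by (simp add: g_def)
  qed
  have finop: "finite (op p)" if "p \<in> A" for p
  proof -
    have "op p \<subseteq> p \<times> p" unfolding op_def by auto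
    moreover have "finite p" using that A fin by (auto intro: rev_finite_subset)
    ultimately show ?thesis by (auto intro: rev_finite_subset)
  qed
  have "(\<Sum>p\<in>A. \<Prod>i\<in>p. x i) = (\<Sum>p\<in>A. \<Sum>q\<in>op p. g q)/2"
    using one by (simp add: sum_divide_distrib)
  also have "(\<Sum>p\<in>A. \<Sum>q\<in>op p. g q) = (\<Sum>pq\<in>Sigma A op. g (snd pq))"
    by (subst sum.Sigma) (use finA finop in \<open>auto simp: case_prod_beta\<close>)
  also have "\<dots> = (\<Sum>q\<in>snd ` Sigma A op. g q)"
  proof (rule sum.reindex[symmetric, unfolded comp_def])
    show "inj_on snd (Sigma A op)"
    proof (rule inj_onI)
      fix a b assume a: "a \<in> Sigma A op" and b: "b \<in> Sigma A op" and eq: "snd a = snd b"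
      obtain p q where aa: "a = (p,q)" by (cases a) blast
      obtain p' q' where bb: "b = (p',q')" by (cases b) blast
      from a aa have "p \<in> A" "q \<in> op p" by auto
      from b bb have "p' \<in> A" "q' \<in> op p'" by auto
      have "card p = 2" "card p' = 2" using \<open>p\<in>A\<close> \<open>p'\<in>A\<close> A by auto
      have "p = {fst q, snd q}"
      proof -
        have sub: "{fst q, snd q} \<subseteq> p" "fst q \<noteq> snd q" using \<open>q \<in> op p\<close> unfolding op_def by auto
        have "finite p" using \<open>card p = 2\<close> card.infinite by fastforce
        then show ?thesis using sub \<open>card p = 2\<close> by (metis card_2_iff card_subset_eq)
      qed
      moreover have "p' = {fst q', snd q'}"
      proof -
        have sub: "{fst q', snd q'} \<subseteq> p'" "fst q' \<noteq> snd q'" using \<open>q' \<in> op p'\<close> unfolding op_def by auto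
        have "finite p'" using \<open>card p' = 2\<close> card.infinite by fastforce
        then show ?thesis using sub \<open>card p' = 2\<close> by (metis card_2_iff card_subset_eq)
      qed
      ultimately show "a = b" using aa bb eq by auto
    qed
  qed
  also have "\<dots> \<le> (\<Sum>q\<in>Sigma R (\<lambda>u. R - {u}). g q)"
  proof (rule sum_mono2)
    show "finite (Sigma R (\<lambda>u. R - {u}))" using fin by auto
    show "snd ` Sigma A op \<subseteq> Sigma R (\<lambda>u. R - {u})"
    proof
      fix q assume "q \<in> snd ` Sigma A op"
      then obtain p where p: "p \<in> A" "q \<in> op p" by auto
      then have "p \<subseteq> R" using A by auto
      then show "q \<in> Sigma R (\<lambda>u. R - {u})" using p(2) unfolding op_def by auto
    qed
    show "\<And>b. b\<in>Sigma R (\<lambda>u. R - {u}) - snd ` Sigma A op \<Longrightarrow> 0 \<le> g b" using nn unfolding g_def by auto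
  qed
  also have "\<dots> = (\<Sum>u\<in>R. \<Sum>v\<in>R - {u}. x u * x v)"
  proof -
    have "(\<Sum>u\<in>R. \<Sum>v\<in>R - {u}. x u * x v) = (\<Sum>(u,v)\<in>Sigma R (\<lambda>u. R - {u}). x u * x v)"
      by (rule sum.Sigma) (use fin in auto)
    then show ?thesis unfolding g_def by (simp add: case_prod_beta)
  qed
  also have "\<dots> = (\<Sum>u\<in>R. x u * ((\<Sum>r\<in>R. x r) - x u))"
    by (rule sum.cong) (use fin in \<open>auto simp: sum_distrib_left[symmetric] sum_diff1\<close>)
  also have "\<dots> = (\<Sum>r\<in>R. x r)^2 - (\<Sum>r\<in>R. (x r)^2)"
    by (simp add: right_diff_distrib sum_subtractf sum_distrib_right[symmetric] power2_eq_square)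
  finally show ?thesis by linarith
qed

lemma add4_le: "(s::real) = s1+s2+s3+s4 \<Longrightarrow> s1 \<le> A \<Longrightarrow> s2 \<le> B \<Longrightarrow> s3 \<le> C \<Longrightarrow> s4 \<le> D \<Longrightarrow> s \<le> A+B+C+D"
  by linarith

lemma poly_bound_parts:
  fixes x :: "'a \<Rightarrow> real"
  assumes fin: "finite V" and Ecard: "\<forall>e\<in>E. e \<subseteq> V \<and> card e = 3"
  and dist: "distinct [a,b,c1,d1,c2,d2,c3,d3]"
  and inV: "{a,b,c1,d1,c2,d2,c3,d3} \<subseteq> V"
  and cover: "\<forall>e\<in>E. a\<in>e \<or> b\<in>e \<or> (e\<inter>{c1,d1}\<noteq>{} \<and> e\<inter>{c2,d2}\<noteq>{} \<and> e\<inter>{c3,d3}\<noteq>{})"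
  and nn: "\<forall>i\<in>V. 0 \<le> x i"
  shows "(\<Sum>e\<in>E. \<Prod>i\<in>e. x i) \<le> x a * x b * (\<Sum>r\<in>V-{a,b}. x r)
     + x a * (((\<Sum>r\<in>V-{a,b}. x r)^2 - (\<Sum>r\<in>V-{a,b}. (x r)^2))/2)
     + x b * (((\<Sum>r\<in>V-{a,b}. x r)^2 - (\<Sum>r\<in>V-{a,b}. (x r)^2))/2)
     + (x c1 + x d1) * (x c2 + x d2) * (x c3 + x d3)"
proof -
  define R where "R = V - {a,b}"
  define S where "S = (\<Sum>r\<in>R. x r)"
  define Q where "Q = (\<Sum>r\<in>R. (x r)^2)"
  define E1 where "E1 = {e\<in>E. a\<in>e \<and> b\<in>e}"
  define E2 where "E2 = {e\<in>E. a\<in>e \<and> b\<notin>e}"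
  define E3 where "E3 = {e\<in>E. a\<notin>e \<and> b\<in>e}"
  define E4 where "E4 = {e\<in>E. a\<notin>e \<and> b\<notin>e}"
  define w where "w e = (\<Prod>i\<in>e. x i)" for e
  have finE: "finite E"
  proof -
    have "E \<subseteq> Pow V" using Ecard by auto
    then show ?thesis using fin by (auto intro: rev_finite_subset)
  qed
  have finR: "finite R" unfolding R_def using fin by auto
  have nnR: "\<forall>r\<in>R. 0 \<le> x r" unfolding R_def using nn by auto
  have wnn: "0 \<le> w e" if "e \<subseteq> V" for e unfolding w_def using nn that by (auto intro: prod_nonneg)
  have fine: "finite e" if "e \<in> E" for e using that Ecard fin by (auto intro: rev_finite_subset)
  have split: "(\<Sum>e\<in>E. w e) = (\<Sum>e\<in>E1. w e) + (\<Sum>e\<in>E2. w e) + (\<Sum>e\<in>E3. w e) + (\<Sum>e\<in>E4. w e)"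
  proof -
    have "E = ((E1 \<union> E2) \<union> E3) \<union> E4" unfolding E1_def E2_def E3_def E4_def by auto
    moreover have "finite E1" "finite E2" "finite E3" "finite E4"
      using finE unfolding E1_def E2_def E3_def E4_def by auto
    moreover have "(E1 \<union> E2) \<inter> E3 = {}" "E1 \<inter> E2 = {}" "(E1 \<union> E2 \<union> E3) \<inter> E4 = {}"
      unfolding E1_def E2_def E3_def E4_def by auto
    ultimately show ?thesis
      by (simp only: sum.union_disjoint finite_UnI)
  qed
  have b1: "(\<Sum>e\<in>E1. w e) \<le> x a * x b * S"
  proof -
    have sub: "E1 \<subseteq> (\<lambda>r. {a,b,r}) ` R"
    proof
      fix e assume e: "e \<in> E1"
      then have eE: "e \<in> E" "a \<in> e" "b \<in> e" unfolding E1_def by auto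
      have c3: "card e = 3" "e \<subseteq> V" using eE Ecard by auto
      have "e - {a,b} \<noteq> {}"
      proof
        assume "e - {a,b} = {}"
        then have "e \<subseteq> {a,b}" by auto
        then have "card e \<le> card {a,b}" by (intro card_mono) auto
        also have "card {a,b} \<le> 2" by (simp add: card_insert_if)
        finally have "card e \<le> 2" .
        then show False using c3 by simp
      qed
      then obtain r where r: "r \<in> e" "r \<notin> {a,b}" by auto
      have "{a,b,r} \<subseteq> e" using eE r by auto
      moreover have "card {a,b,r} = 3" using r dist by auto
      ultimately have "e = {a,b,r}" using c3 fine[OF eE(1)] by (metis card_subset_eq)
      moreover have "r \<in> R" unfolding R_def using r c3 by auto
      ultimately show "e \<in> (\<lambda>r. {a,b,r}) ` R" by auto
    qed
    have "(\<Sum>e\<in>E1. w e) \<le> (\<Sum>e\<in>(\<lambda>r. {a,b,r}) ` R. w e)"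
    proof (rule sum_mono2)
      show "finite ((\<lambda>r. {a,b,r}) ` R)" using finR by auto
      show "E1 \<subseteq> (\<lambda>r. {a,b,r}) ` R" by (rule sub)
      show "\<And>e. e\<in>(\<lambda>r. {a,b,r}) ` R - E1 \<Longrightarrow> 0 \<le> w e" using inV by (auto simp: R_def intro!: wnn)
    qed
    also have "\<dots> \<le> (\<Sum>r\<in>R. w {a,b,r})"
      using sum_image_le[where I=R and f="\<lambda>r. {a,b,r}" and g=w] finR inV by (auto simp: R_def comp_def intro!: wnn)
    also have "\<dots> = (\<Sum>r\<in>R. x a * x b * x r)"
      by (rule sum.cong) (use dist in \<open>auto simp: w_def R_def\<close>)
    also have "\<dots> = x a * x b * S" unfolding S_def by (simp add: sum_distrib_left)
    finally show ?thesis .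
  qed
  have b23: "(\<Sum>e\<in>{e\<in>E. v\<in>e \<and> v'\<notin>e}. w e) \<le> x v * ((S^2 - Q)/2)"
    if vv: "{v,v'} = {a,b}" "v \<noteq> v'" for v v'
  proof -
    define F where "F = {e\<in>E. v\<in>e \<and> v'\<notin>e}"
    have vV: "v \<in> V" using vv inV by auto
    have eqF: "(\<Sum>e\<in>F. w e) = x v * (\<Sum>e\<in>F. w (e - {v}))"
    proof -
      have "(\<Sum>e\<in>F. w e) = (\<Sum>e\<in>F. x v * w (e - {v}))"
        by (rule sum.cong) (auto simp: F_def w_def fine prod.remove)
      also have "\<dots> = x v * (\<Sum>e\<in>F. w (e - {v}))" by (simp add: sum_distrib_left)
      finally show ?thesis .
    qed
    have "(\<Sum>e\<in>F. w (e - {v})) = (\<Sum>p\<in>(\<lambda>e. e - {v}) ` F. w p)"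
    proof (rule sum.reindex[symmetric, unfolded comp_def])
      show "inj_on (\<lambda>e. e - {v}) F"
      proof (rule inj_onI)
        fix e e' assume "e \<in> F" "e' \<in> F" "e - {v} = e' - {v}"
        then have "v \<in> e" "v \<in> e'" unfolding F_def by auto
        then show "e = e'" using \<open>e - {v} = e' - {v}\<close> by (metis insert_Diff)
      qed
    qed
    also have "\<dots> \<le> (S^2 - Q)/2" unfolding w_def S_def Q_def
    proof (rule pairs_bound[OF finR nnR])
      show "(\<lambda>e. e - {v}) ` F \<subseteq> {p. p \<subseteq> R \<and> card p = 2}"
      proof
        fix p assume "p \<in> (\<lambda>e. e - {v}) ` F"
        then obtain e where e: "e \<in> F" "p = e - {v}" by auto
        then have "e \<in> E" "v \<in> e" "v' \<notin> e" unfolding F_def by auto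
        then have "e \<subseteq> V" "card e = 3" using Ecard by auto
        have "p \<subseteq> R" unfolding R_def using e \<open>e \<subseteq> V\<close> \<open>v' \<notin> e\<close> vv by auto
        moreover have "card p = 2" using e \<open>card e = 3\<close> \<open>v \<in> e\<close> fine[OF \<open>e\<in>E\<close>] by simp
        ultimately show "p \<in> {p. p \<subseteq> R \<and> card p = 2}" by simp
      qed
    qed
    finally have T: "(\<Sum>e\<in>F. w (e - {v})) \<le> (S^2 - Q)/2" .
    have "(\<Sum>e\<in>F. w e) \<le> x v * ((S^2 - Q)/2)"
      unfolding eqF
      by (rule mult_left_mono[OF T]) (use nn vV in auto)
    then show ?thesis unfolding F_def .
  qed
  have b2: "(\<Sum>e\<in>E2. w e) \<le> x a * ((S^2 - Q)/2)" unfolding E2_def using b23[of a b] dist by auto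
  have b3: "(\<Sum>e\<in>E3. w e) \<le> x b * ((S^2 - Q)/2)"
  proof -
    have "E3 = {e\<in>E. b\<in>e \<and> a\<notin>e}" unfolding E3_def by auto
    then show ?thesis using b23[of b a] dist by auto
  qed
  have b4: "(\<Sum>e\<in>E4. w e) \<le> (x c1 + x d1) * (x c2 + x d2) * (x c3 + x d3)"
  proof -
    define P where "P = {c1,d1} \<times> ({c2,d2} \<times> {c3,d3})"
    define h where "h = (\<lambda>(y1::'a,(y2::'a,y3::'a)). {y1,y2,y3})"
    have sub: "E4 \<subseteq> h ` P"
    proof
      fix e assume e: "e \<in> E4"
      then have eE: "e \<in> E" "a \<notin> e" "b \<notin> e" unfolding E4_def by auto
      have cv: "e\<inter>{c1,d1}\<noteq>{}" "e\<inter>{c2,d2}\<noteq>{}" "e\<inter>{c3,d3}\<noteq>{}" using cover eE by auto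
      obtain y1 where y1: "y1 \<in> e" "y1 \<in> {c1,d1}" using cv(1) by blast
      obtain y2 where y2: "y2 \<in> e" "y2 \<in> {c2,d2}" using cv(2) by blast
      obtain y3 where y3: "y3 \<in> e" "y3 \<in> {c3,d3}" using cv(3) by blast
      have n12: "y1 \<noteq> y2" using y1(2) y2(2) dist by auto
      have n13: "y1 \<noteq> y3" using y1(2) y3(2) dist by auto
      have n23: "y2 \<noteq> y3" using y3(2) y2(2) dist by auto
      have "{y1,y2,y3} \<subseteq> e" using y1 y2 y3 by simp
      moreover have "card {y1,y2,y3} = 3" using n12 n13 n23 by simp
      moreover have "card e = 3" using eE Ecard by auto
      ultimately have "e = {y1,y2,y3}" using fine[OF eE(1)] by (metis card_subset_eq)
      moreover have "(y1,(y2,y3)) \<in> P" unfolding P_def using y1(2) y2(2) y3(2) by blast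
      ultimately show "e \<in> h ` P" unfolding h_def by (auto intro: rev_image_eqI)
    qed
    have "(\<Sum>e\<in>E4. w e) \<le> (\<Sum>e\<in>h ` P. w e)"
    proof (rule sum_mono2)
      show "finite (h ` P)" unfolding P_def by auto
      show "E4 \<subseteq> h ` P" by (rule sub)
      show "\<And>e. e\<in>h ` P - E4 \<Longrightarrow> 0 \<le> w e" using inV by (auto simp: P_def h_def intro!: wnn)
    qed
    also have "\<dots> \<le> (\<Sum>y\<in>P. w (h y))"
      using sum_image_le[where I=P and f=h and g=w] inV by (auto simp: P_def h_def comp_def intro!: wnn)
    also have "\<dots> = (\<Sum>y\<in>P. x (fst y) * x (fst (snd y)) * x (snd (snd y)))"
      by (rule sum.cong) (use dist in \<open>auto simp: P_def h_def w_def\<close>)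
    also have "\<dots> = (x c1 + x d1) * (x c2 + x d2) * (x c3 + x d3)"
      using dist by (simp add: P_def sum.cartesian_product[symmetric] algebra_simps)
    finally show ?thesis .
  qed
  have "(\<Sum>e\<in>E. w e) \<le> x a * x b * S + x a * ((S^2 - Q)/2) + x b * ((S^2 - Q)/2) + (x c1 + x d1) * (x c2 + x d2) * (x c3 + x d3)"
    by (rule add4_le[OF split b1 b2 b3 b4])
  then show ?thesis unfolding w_def S_def Q_def R_def .
qed

lemma lag_le:
  fixes B :: real
  assumes ne: "V \<noteq> {}" and fin: "finite V"
    and bnd: "\<And>x. (\<forall>i\<in>V. 0 \<le> x i) \<Longrightarrow> (\<Sum>i\<in>V. x i) = 1 \<Longrightarrow> (\<Sum>e\<in>E. \<Prod>i\<in>e. x i) \<le> B"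
  shows "lagrangian V E \<le> B"
proof -
  let ?X = "{(\<Sum>e\<in>E. \<Prod>i\<in>e. x i) | x :: 'a \<Rightarrow> real. (\<forall>i\<in>V. 0 \<le> x i) \<and> (\<Sum>i\<in>V. x i) = 1}"
  have cV: "card V > 0" using ne fin by (simp add: card_gt_0_iff)
  have "(\<Sum>i\<in>V. (\<lambda>i. 1 / real (card V)) i) = 1" using cV by simp
  then have "?X \<noteq> {}" by (auto intro!: exI[of _ "\<lambda>i. 1 / real (card V)"])
  moreover have "\<forall>y\<in>?X. y \<le> B" using bnd by auto
  ultimately have "Sup ?X \<le> B" by (meson cSup_least)
  then show ?thesis unfolding lagrangian_def using ne by simp
qed

lemma K4_hit:
  assumes noK: "\<not> contains_copy K43e_V K43e_E V E"
    and dist: "distinct [w1,w2,w3,w4]" and wV: "{w1,w2,w3,w4} \<subseteq> V"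
    and ed: "{w1,w2,w3} \<in> E" "{w1,w2,w4} \<in> E" "{w1,w3,w4} \<in> E" "{w2,w3,w4} \<in> E"
    and e: "e \<in> E" "e \<subseteq> V" "card e = 3"
  shows "e \<inter> {w1,w2,w3,w4} \<noteq> {}"
proof
  assume dis: "e \<inter> {w1,w2,w3,w4} = {}"
  obtain p q r where pqr: "e = {p,q,r}" "p \<noteq> q" "q \<noteq> r" "p \<noteq> r" using e(3) card_3_iff by metis
  have nw: "p \<notin> {w1,w2,w3,w4}" "q \<notin> {w1,w2,w3,w4}" "r \<notin> {w1,w2,w3,w4}" using dis pqr by auto
  define g where "g n = (if n = (1::nat) then w1 else if n = 2 then w2 else if n = 3 then w3
     else if n = 4 then w4 else if n = 5 then p else if n = 6 then q else r)" for n
  have S7: "{1..7::nat} = {1,2,3,4,5,6,7}" by auto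
  have "inj_on g {1..7}"
    unfolding S7 inj_on_def using dist nw pqr(2-4) by (auto simp: g_def)
  moreover have "g ` {1..7} \<subseteq> V" unfolding S7 using wV e(2) pqr(1) by (auto simp: g_def)
  moreover have "\<forall>e'\<in>K43e_E. g ` e' \<in> E"
  proof -
    have i: "g ` {5,6,7} = e" "g ` {1,2,3} = {w1,w2,w3}" "g ` {1,2,4} = {w1,w2,w4}"
      "g ` {1,3,4} = {w1,w3,w4}" "g ` {2,3,4} = {w2,w3,w4}" using pqr(1) by (auto simp: g_def)
    show ?thesis unfolding K43e_E_def by (simp only: ball_simps i ed e(1) simp_thms)
  qed
  ultimately have "contains_copy K43e_V K43e_E V E" unfolding contains_copy_def K43e_V_def by blast
  then show False using noK by simp
qed

lemma poly_bound:
  fixes x :: "'a \<Rightarrow> real"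
  assumes fin: "finite V" and Ecard: "\<forall>e\<in>E. e \<subseteq> V \<and> card e = 3"
  and dist: "distinct [a,b,c1,d1,c2,d2,c3,d3]"
  and inV: "{a,b,c1,d1,c2,d2,c3,d3} \<subseteq> V"
  and cover: "\<forall>e\<in>E. a\<in>e \<or> b\<in>e \<or> (e\<inter>{c1,d1}\<noteq>{} \<and> e\<inter>{c2,d2}\<noteq>{} \<and> e\<inter>{c3,d3}\<noteq>{})"
  and nn: "\<forall>i\<in>V. 0 \<le> x i" and sum1: "(\<Sum>i\<in>V. x i) = 1"
  shows "(\<Sum>e\<in>E. \<Prod>i\<in>e. x i) \<le> sqrt 3 / 18"
proof -
  define R where "R = V - {a,b}"
  define S where "S = (\<Sum>r\<in>R. x r)"
  define Q where "Q = (\<Sum>r\<in>R. (x r)^2)"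
  define T where "T = (S^2 - Q)/2"
  have parts: "(\<Sum>e\<in>E. \<Prod>i\<in>e. x i) \<le> x a * x b * S + x a * T + x b * T
     + (x c1 + x d1) * (x c2 + x d2) * (x c3 + x d3)"
    using poly_bound_parts[OF fin Ecard dist inV cover nn] unfolding T_def S_def Q_def R_def .
  have aV: "a \<in> V" and bV: "b \<in> V" using inV by auto
  have ab: "a \<noteq> b" using dist by simp
  have finR: "finite R" unfolding R_def using fin by simp
  have "(\<Sum>i\<in>V. x i) = x a + (\<Sum>i\<in>V - {a}. x i)" using sum.remove[OF fin aV] .
  also have "(\<Sum>i\<in>V - {a}. x i) = x b + (\<Sum>i\<in>V - {a} - {b}. x i)"
    using sum.remove[of "V - {a}" b x] fin bV ab by simp
  also have "V - {a} - {b} = R" unfolding R_def by auto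
  finally have s1: "x a + x b + S = 1" using sum1 unfolding S_def by simp
  have six: "{c1,d1,c2,d2,c3,d3} \<subseteq> R" unfolding R_def using inV dist by auto
  have nnR: "\<And>r. r \<in> R \<Longrightarrow> 0 \<le> x r" using nn unfolding R_def by auto
  have "(\<Sum>r\<in>{c1,d1,c2,d2,c3,d3}. x r) \<le> S" unfolding S_def
    by (rule sum_mono2[OF finR six]) (use nnR in auto)
  moreover have "(\<Sum>r\<in>{c1,d1,c2,d2,c3,d3}. x r) = x c1 + x d1 + x c2 + x d2 + x c3 + x d3"
    using dist by (simp add: add.assoc)
  ultimately have sig: "x c1 + x d1 + x c2 + x d2 + x c3 + x d3 \<le> S" by simp
  have "(\<Sum>r\<in>{c1,d1,c2,d2,c3,d3}. (x r)^2) \<le> Q" unfolding Q_def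
    by (rule sum_mono2[OF finR six]) auto
  moreover have "(\<Sum>r\<in>{c1,d1,c2,d2,c3,d3}. (x r)^2) = (x c1)^2 + (x d1)^2 + (x c2)^2 + (x d2)^2 + (x c3)^2 + (x d3)^2"
    using dist by (simp add: add.assoc)
  ultimately have Qb: "(x c1)^2 + (x d1)^2 + (x c2)^2 + (x d2)^2 + (x c3)^2 + (x d3)^2 \<le> Q" by simp
  have nn8: "0 \<le> x a" "0 \<le> x b" "0 \<le> x c1" "0 \<le> x d1" "0 \<le> x c2" "0 \<le> x d2" "0 \<le> x c3" "0 \<le> x d3"
    using nn inV by auto
  have fin_b: "x a * x b * S + (x a + x b) * ((S^2 - Q)/2) + (x c1 + x d1) * (x c2 + x d2) * (x c3 + x d3) \<le> sqrt 3 / 18"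
    by (rule bound_real[OF nn8 s1 sig Qb])
  have "x a * x b * S + x a * T + x b * T + (x c1 + x d1) * (x c2 + x d2) * (x c3 + x d3)
     = x a * x b * S + (x a + x b) * ((S^2 - Q)/2) + (x c1 + x d1) * (x c2 + x d2) * (x c3 + x d3)"
    unfolding T_def by (simp add: distrib_right)
  then show ?thesis using parts fin_b by simp
qed

lemma XE: "j \<in> {1..3} \<Longrightarrow> e \<subseteq> {1, 2, 2*j+1, 2*j+2} \<Longrightarrow> card e = 3 \<Longrightarrow> e \<in> X_E 3"
  unfolding X_E_def by blast

theorem lemma5p11:
  fixes V :: "'a set" and E :: "'a set set"
  assumes "hypergraph3 V E"
    and "dense3 V E"
    and "\<not> contains_copy K43e_V K43e_E V E"
    and "lagrangian V E > sqrt 3 / 18"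
  shows "\<not> contains_copy (X_V 3) (X_E 3) V E"
proof
  assume "contains_copy (X_V 3) (X_E 3) V E"
  then obtain f where inj: "inj_on f {1..8::nat}" and fV: "f ` {1..8} \<subseteq> V"
    and fE: "\<forall>e\<in>X_E 3. f ` e \<in> E"
    unfolding contains_copy_def X_V_def by auto
  have hyp: "finite V" "\<forall>e\<in>E. e \<subseteq> V \<and> card e = 3" using assms(1) unfolding hypergraph3_def by auto
  have S8: "{1..8::nat} = {1,2,3,4,5,6,7,8}" by auto
  have dist: "distinct [f 1, f 2, f 3, f 4, f 5, f 6, f 7, f 8]"
    using inj unfolding S8 inj_on_def by auto
  have inV: "{f 1, f 2, f 3, f 4, f 5, f 6, f 7, f 8} \<subseteq> V" using fV unfolding S8 by auto
  have edge: "{f 1, f 2, f u} \<in> E" "{f 1, f 2, f v} \<in> E" "{f 1, f u, f v} \<in> E" "{f 2, f u, f v} \<in> E"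
    if "j \<in> {1..3}" "u = 2*j+1" "v = 2*j+2" for j u v
  proof -
    have uv: "u \<noteq> 1" "u \<noteq> 2" "v \<noteq> 1" "v \<noteq> 2" "u \<noteq> v" using that by auto
    have "{1,2,u} \<in> X_E 3" by (rule XE[OF that(1)]) (use that uv in auto)
    then show "{f 1, f 2, f u} \<in> E" using fE by force
    have "{1,2,v} \<in> X_E 3" by (rule XE[OF that(1)]) (use that uv in auto)
    then show "{f 1, f 2, f v} \<in> E" using fE by force
    have "{1,u,v} \<in> X_E 3" by (rule XE[OF that(1)]) (use that uv in auto)
    then show "{f 1, f u, f v} \<in> E" using fE by force
    have "{2,u,v} \<in> X_E 3" by (rule XE[OF that(1)]) (use that uv in auto)
    then show "{f 2, f u, f v} \<in> E" using fE by force
  qed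
  have hit: "e \<inter> {f 1, f 2, f u, f v} \<noteq> {}"
    if "e \<in> E" "j \<in> {1..3}" "u = 2*j+1" "v = 2*j+2" for e j u v
  proof (rule K4_hit[OF assms(3)])
    have "u \<in> {3..8}" "v \<in> {3..8}" "u \<noteq> v" using that by auto
    then show "distinct [f 1, f 2, f u, f v]" by (auto simp: inj_on_eq_iff[OF inj])
    show "{f 1, f 2, f u, f v} \<subseteq> V" using fV \<open>u \<in> {3..8}\<close> \<open>v \<in> {3..8}\<close> by auto
    show "{f 1, f 2, f u} \<in> E" "{f 1, f 2, f v} \<in> E" "{f 1, f u, f v} \<in> E" "{f 2, f u, f v} \<in> E"
      using edge[OF that(2-4)] by auto
    show "e \<in> E" "e \<subseteq> V" "card e = 3" using that(1) hyp by auto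
  qed
  have cover: "\<forall>e\<in>E. f 1 \<in> e \<or> f 2 \<in> e \<or> (e \<inter> {f 3, f 4} \<noteq> {} \<and> e \<inter> {f 5, f 6} \<noteq> {} \<and> e \<inter> {f 7, f 8} \<noteq> {})"
  proof
    fix e assume "e \<in> E"
    have "e \<inter> {f 1, f 2, f 3, f 4} \<noteq> {}" using hit[OF \<open>e\<in>E\<close>, of 1] by simp
    moreover have "e \<inter> {f 1, f 2, f 5, f 6} \<noteq> {}" using hit[OF \<open>e\<in>E\<close>, of 2] by simp
    moreover have "e \<inter> {f 1, f 2, f 7, f 8} \<noteq> {}" using hit[OF \<open>e\<in>E\<close>, of 3] by simp
    ultimately show "f 1 \<in> e \<or> f 2 \<in> e \<or> (e \<inter> {f 3, f 4} \<noteq> {} \<and> e \<inter> {f 5, f 6} \<noteq> {} \<and> e \<inter> {f 7, f 8} \<noteq> {})"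
      by blast
  qed
  have "lagrangian V E \<le> sqrt 3 / 18"
  proof (rule lag_le)
    show "V \<noteq> {}" using inV by auto
    show "finite V" using hyp by simp
    fix x :: "'a \<Rightarrow> real" assume "\<forall>i\<in>V. 0 \<le> x i" "(\<Sum>i\<in>V. x i) = 1"
    then show "(\<Sum>e\<in>E. \<Prod>i\<in>e. x i) \<le> sqrt 3 / 18"
      by (rule poly_bound[OF hyp dist inV cover])
  qed
  then show False using assms(4) by simp
qed

end
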